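(* Let $\beta,\mu$ be positive reals with $\beta+2\sqrt{\mu}\le\frac{1}{1200}$. Let $G$ be an $n$-vertex graph with minimum degree at least $\frac{n}{5}$ and at least $\binom{n}{2}-\beta n^2$ edges, and let $\mathcal{F}$ be a $\mu n$-bounded incompatibility system over $G$. Then for every edge $e$ of $G$ there exists a Hamilton cycle of $G$ containing $e$ that is compatible with $\mathcal{F}$.
   Context: All graphs are finite and simple. An incompatibility system $\mathcal{F}$ over $G=(V,E)$ is a family $\{F_v\}_{v\in V}$ where each $F_v$ is a set of unordered pairs $\{e,e'\}$ of distinct edges with $e\cap e'=\{v\}$; edges $e,e'$ are incompatible if $\{e,e'\}\in F_v$ for some $v$, compatible otherwise. A cycle is compatible with $\mathcal{F}$ if every pair of its edges is compatible. For a positive real $\Delta$, $\mathcal{F}$ is $\Delta$-bounded if for every vertex $v$ and edge $e\ni v$, at most $\Delta$ other edges $e'\ni v$ satisfy $\{e,e'\}\in F_v$. *)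

theory Defs
  imports Complex_Main
begin

definition simple_graph :: "'a set \<Rightarrow> 'a set set \<Rightarrow> bool" where
  "simple_graph V E \<longleftrightarrow> finite V \<and>
     (\<forall>e\<in>E. \<exists>u v. e = {u, v} \<and> u \<noteq> v \<and> u \<in> V \<and> v \<in> V)"

definition degree :: "'a set set \<Rightarrow> 'a \<Rightarrow> nat" where
  "degree E v = card {u. {u, v} \<in> E}"

definition incompatibility_system :: "'a set set \<Rightarrow> ('a \<Rightarrow> 'a set set set) \<Rightarrow> bool" where
  "incompatibility_system E F \<longleftrightarrow>
     (\<forall>v. \<forall>p\<in>F v. \<exists>e e'. p = {e, e'} \<and> e \<in> E \<and> e' \<in> E \<and> e \<noteq> e' \<and> e \<inter> e' = {v})"

definition incompatible :: "('a \<Rightarrow> 'a set set set) \<Rightarrow> 'a set \<Rightarrow> 'a set \<Rightarrow> bool" where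
  "incompatible F e e' \<longleftrightarrow> (\<exists>v. {e, e'} \<in> F v)"

definition bounded_system :: "real \<Rightarrow> 'a set set \<Rightarrow> ('a \<Rightarrow> 'a set set set) \<Rightarrow> bool" where
  "bounded_system \<Delta> E F \<longleftrightarrow>
     (\<forall>v. \<forall>e\<in>E. v \<in> e \<longrightarrow>
        real (card {e'\<in>E. e' \<noteq> e \<and> v \<in> e' \<and> {e, e'} \<in> F v}) \<le> \<Delta>)"

definition ham_cycle :: "'a set \<Rightarrow> 'a set set \<Rightarrow> 'a list \<Rightarrow> bool" where
  "ham_cycle V E vs \<longleftrightarrow> distinct vs \<and> set vs = V \<and> length vs \<ge> 3 \<and>
     (\<forall>i < length vs. {vs ! i, vs ! (Suc i mod length vs)} \<in> E)"

definition cycle_edges :: "'a list \<Rightarrow> 'a set set" where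
  "cycle_edges vs = {{vs ! i, vs ! (Suc i mod length vs)} | i. i < length vs}"

definition compatible_cycle :: "('a \<Rightarrow> 'a set set set) \<Rightarrow> 'a list \<Rightarrow> bool" where
  "compatible_cycle F vs \<longleftrightarrow>
     (\<forall>e\<in>cycle_edges vs. \<forall>e'\<in>cycle_edges vs. e \<noteq> e' \<longrightarrow> \<not> incompatible F e e')"

end

theory Submission
  imports Defs
begin

fun pe :: "'a list \<Rightarrow> 'a set set" where
  "pe [] = {}" | "pe [x] = {}" | "pe (x#y#zs) = insert {x,y} (pe (y#zs))"

lemma pe_Cons: "xs \<noteq> [] \<Longrightarrow> pe (x#xs) = insert {x, hd xs} (pe xs)"
  by (cases xs) auto

lemma pe_append: "A \<noteq> [] \<Longrightarrow> B \<noteq> [] \<Longrightarrow> pe (A @ B) = pe A \<union> pe B \<union> {{last A, hd B}}"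
proof (induction A rule: pe.induct)
  case 1 then show ?case by simp
next
  case (2 x) then show ?case by (simp add: pe_Cons)
next
  case (3 x y zs) then show ?case by auto
qed

lemma pe_rev: "pe (rev A) = pe A"
proof (induction A rule: pe.induct)
  case (3 x y zs)
  have "pe (rev (x#y#zs)) = pe (rev (y#zs) @ [x])" by simp
  also have "\<dots> = pe (rev (y#zs)) \<union> {{y, x}}"
    by (subst pe_append) (auto simp: last_rev)
  finally show ?case using 3 by (auto simp: insert_commute)
qed auto

lemma pe_subset: "f \<in> pe A \<Longrightarrow> f \<subseteq> set A"
  by (induction A rule: pe.induct) auto

lemma pe_finite: "finite (pe A)"
  by (induction A rule: pe.induct) auto

lemma pe_len: "f \<in> pe A \<Longrightarrow> 2 \<le> length A"
  by (induction A rule: pe.induct) auto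

lemma pe_hd: "distinct A \<Longrightarrow> f \<in> pe A \<Longrightarrow> hd A \<in> f \<Longrightarrow> f = {hd A, A!1}"
proof (cases A rule: pe.cases)
  case (3 x y zs)
  assume d: "distinct A" and f: "f \<in> pe A" and h: "hd A \<in> f"
  show ?thesis
  proof (cases "f = {x,y}")
    case False
    then have "f \<in> pe (y#zs)" using f 3 by auto
    then have "f \<subseteq> set (y#zs)" by (rule pe_subset)
    then show ?thesis using h d 3 by auto
  qed (use 3 in auto)
qed auto

lemma pe_last: "distinct A \<Longrightarrow> f \<in> pe A \<Longrightarrow> last A \<in> f \<Longrightarrow> f = {A!(length A - 2), last A}"
proof -
  assume d: "distinct A" and f: "f \<in> pe A" and l: "last A \<in> f"
  have len: "2 \<le> length A" using pe_len[OF f] .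
  then have ne: "A \<noteq> []" by auto
  have "f = {hd (rev A), rev A ! 1}"
    using pe_hd[of "rev A" f] d f l pe_rev[of A] ne by (simp add: hd_rev)
  moreover have "rev A ! 1 = A ! (length A - 2)" using len by (simp add: rev_nth numeral_2_eq_2)
  ultimately show ?thesis using ne by (auto simp: hd_rev)
qed

lemma pe_nth: "pe L = {{L!i, L!Suc i} | i. Suc i < length L}"
proof (induction L rule: pe.induct)
  case (3 x y zs)
  show ?case
  proof (rule set_eqI, rule iffI)
    fix f assume "f \<in> pe (x#y#zs)"
    then consider "f = {x,y}" | "f \<in> pe (y#zs)" by auto
    then show "f \<in> {{(x#y#zs)!i, (x#y#zs)!Suc i} | i. Suc i < length (x#y#zs)}"
    proof cases
      case 1 then show ?thesis by force
    next
      case 2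
      then obtain i where "f = {(y#zs)!i, (y#zs)!Suc i}" "Suc i < length (y#zs)" using 3 by auto
      then show ?thesis by (intro CollectI exI[of _ "Suc i"]) auto
    qed
  next
    fix f assume "f \<in> {{(x#y#zs)!i, (x#y#zs)!Suc i} | i. Suc i < length (x#y#zs)}"
    then obtain i where fi: "f = {(x#y#zs)!i, (x#y#zs)!Suc i}" "Suc i < length (x#y#zs)" by auto
    show "f \<in> pe (x#y#zs)"
    proof (cases i)
      case 0 then show ?thesis using fi by simp
    next
      case (Suc j)
      then have "f \<in> {{(y#zs)!i, (y#zs)!Suc i} | i. Suc i < length (y#zs)}" using fi by auto
      then show ?thesis using 3 by auto
    qed
  qed
qed auto

lemma cyc_image: "cycle_edges L = (\<lambda>i. {L!i, L!(Suc i mod length L)}) ` {..<length L}"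
  by (auto simp: cycle_edges_def)

lemma cyc_finite: "finite (cycle_edges L)"
  by (simp add: cyc_image)

lemma cyc_pe: "2 \<le> length L \<Longrightarrow> cycle_edges L = pe L \<union> {{last L, hd L}}"
proof -
  assume len: "2 \<le> length L"
  show ?thesis
  proof (rule set_eqI, rule iffI)
    fix f assume "f \<in> cycle_edges L"
    then obtain i where i: "i < length L" "f = {L!i, L!(Suc i mod length L)}"
      by (auto simp: cycle_edges_def)
    show "f \<in> pe L \<union> {{last L, hd L}}"
    proof (cases "Suc i < length L")
      case True then show ?thesis using i by (auto simp: pe_nth)
    next
      case False
      then have "i = length L - 1" using i by simp
      moreover have "L \<noteq> []" using len by auto
      ultimately have "f = {last L, hd L}" using i by (simp add: last_conv_nth hd_conv_nth)
      then show ?thesis by simp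
    qed
  next
    fix f assume "f \<in> pe L \<union> {{last L, hd L}}"
    then consider "f \<in> pe L" | "f = {last L, hd L}" by auto
    then show "f \<in> cycle_edges L"
    proof cases
      case 1
      then obtain i where "f = {L!i, L!Suc i}" "Suc i < length L" by (auto simp: pe_nth)
      then show ?thesis unfolding cycle_edges_def by (intro CollectI exI[of _ i]) auto
    next
      case 2
      have "L \<noteq> []" using len by auto
      then have "f = {L!(length L - 1), L!(Suc (length L - 1) mod length L)}"
        using 2 len by (simp add: last_conv_nth hd_conv_nth)
      then show ?thesis unfolding cycle_edges_def using len by (intro CollectI exI[of _ "length L - 1"]) auto
    qed
  qed
qed

lemma cyc_rotate1: "2 \<le> length L \<Longrightarrow> cycle_edges (rotate1 L) = cycle_edges L"
proof (cases L)
  case (Cons x xs)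
  assume len: "2 \<le> length L"
  then have ne: "xs \<noteq> []" using Cons by auto
  have "cycle_edges (rotate1 L) = pe (xs @ [x]) \<union> {{x, hd xs}}"
    using Cons len ne by (subst cyc_pe) auto
  also have "\<dots> = pe xs \<union> {{last xs, x}} \<union> {{x, hd xs}}"
    using ne by (subst pe_append) auto
  also have "\<dots> = cycle_edges L"
    using Cons len ne by (subst cyc_pe) (auto simp: pe_Cons)
  finally show ?thesis .
qed simp

lemma cyc_rotate: "2 \<le> length L \<Longrightarrow> cycle_edges (rotate k L) = cycle_edges L"
  by (induction k) (auto simp: cyc_rotate1)

definition BadV :: "('a \<Rightarrow> 'a set set set) \<Rightarrow> 'a list \<Rightarrow> 'a set" where
  "BadV F L = {x. \<exists>f\<in>cycle_edges L. \<exists>g\<in>cycle_edges L. f \<noteq> g \<and> x \<in> f \<and> x \<in> g \<and> incompatible F f g}"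

definition Phi :: "'a set set \<Rightarrow> ('a \<Rightarrow> 'a set set set) \<Rightarrow> 'a list \<Rightarrow> nat" where
  "Phi E F L = card (cycle_edges L - E) + card (BadV F L)"

lemma incompatible_sym: "incompatible F f g = incompatible F g f"
  by (simp add: incompatible_def insert_commute)

lemma BadV_finite: "finite (BadV F L)"
proof -
  have "BadV F L \<subseteq> \<Union>(cycle_edges L)" by (auto simp: BadV_def)
  moreover have "finite (\<Union>(cycle_edges L))"
  proof (rule finite_Union)
    show "finite (cycle_edges L)" by (rule cyc_finite)
    fix f assume "f \<in> cycle_edges L" then show "finite f" by (auto simp: cycle_edges_def)
  qed
  ultimately show ?thesis by (rule finite_subset)
qed

lemma notBadV:
  assumes "{f\<in>cycle_edges L. x \<in> f} \<subseteq> {f1, f2}" "\<not> incompatible F f1 f2"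
  shows "x \<notin> BadV F L"
proof
  assume "x \<in> BadV F L"
  then obtain f g where fg: "f \<in> cycle_edges L" "g \<in> cycle_edges L" "f \<noteq> g" "x \<in> f" "x \<in> g" "incompatible F f g"
    by (auto simp: BadV_def)
  then have "f \<in> {f1,f2}" "g \<in> {f1,f2}" using assms(1) by auto
  then have "(f = f1 \<and> g = f2) \<or> (f = f2 \<and> g = f1)" using fg(3) by auto
  then show False using fg(6) assms(2) incompatible_sym by metis
qed

lemma BadV_same:
  assumes "{f\<in>cycle_edges L. x \<in> f} = {f\<in>cycle_edges L'. x \<in> f}"
  shows "x \<in> BadV F L \<longleftrightarrow> x \<in> BadV F L'"
proof -
  have "\<And>f. f \<in> cycle_edges L \<and> x \<in> f \<longleftrightarrow> f \<in> cycle_edges L' \<and> x \<in> f" using assms by blast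
  then show ?thesis unfolding BadV_def by blast
qed

lemma hd_last_ne: "distinct A \<Longrightarrow> 2 \<le> length A \<Longrightarrow> hd A \<noteq> last A"
  by (cases A) (auto simp: last_conv_nth nth_eq_iff_index_eq)

lemma un5: "X \<union> {a,b,c,d} \<union> {e} = X \<union> {a,b,c,d,e}" by blast
lemma mem8: "f \<in> X \<union> Y \<union> Z \<union> {a,b,c,d,e} \<Longrightarrow> f\<in>X \<or> f\<in>Y \<or> f\<in>Z \<or> f=a \<or> f=b \<or> f=c \<or> f=d \<or> f=e"
  by blast
lemma mem3: "f\<in>X \<or> f\<in>Y \<or> f\<in>Z \<Longrightarrow> f \<in> X \<union> Y \<union> Z \<union> W" by blast

lemma sub2I: "(\<And>f. f \<in> S \<Longrightarrow> x \<in> f \<Longrightarrow> f \<noteq> f2 \<Longrightarrow> f = f1) \<Longrightarrow> {f\<in>S. x \<in> f} \<subseteq> {f1,f2}"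
  by blast

lemma move:
  assumes d: "distinct w" and w: "w = A @ [u] @ B @ [v] @ C"
    and lA: "2 \<le> length A" and lB: "2 \<le> length B" and lC: "2 \<le> length C"
    and uv: "{u,v} = {y,z}" and N: "N = A @ rev B @ C @ [y,z]"
    and E1: "{last A, last B} \<in> E" and E2: "{hd B, hd C} \<in> E" and E3: "{last C, y} \<in> E"
    and E4: "{y,z} \<in> E" and E5: "{z, hd A} \<in> E"
    and c1: "\<not> incompatible F {hd A, A!1} {z, hd A}"
    and c2: "\<not> incompatible F {A!(length A - 2), last A} {last A, last B}"
    and c3: "\<not> incompatible F {hd B, B!1} {hd B, hd C}"
    and c4: "\<not> incompatible F {B!(length B - 2), last B} {last A, last B}"
    and c5: "\<not> incompatible F {hd C, C!1} {hd B, hd C}"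
    and c6: "\<not> incompatible F {C!(length C - 2), last C} {last C, y}"
    and c7: "\<not> incompatible F {last C, y} {y, z}"
    and c8: "\<not> incompatible F {y, z} {z, hd A}"
    and e: "e \<in> cycle_edges w" "e \<notin> {{last A,u},{u,hd B},{last B,v},{v,hd C},{last C,hd A}}"
    and bad: "{last C, hd A} \<notin> E \<or> hd A \<in> BadV F w \<or> last C \<in> BadV F w"
  shows "distinct N \<and> set N = set w \<and> e \<in> cycle_edges N \<and> Phi E F N < Phi E F w"
proof -
  have neA: "A \<noteq> []" and neB: "B \<noteq> []" and neC: "C \<noteq> []" using lA lB lC by auto
  have dA: "distinct A" and dB: "distinct B" and dC: "distinct C" using d w by auto
  have disj: "set A \<inter> set B = {}" "set A \<inter> set C = {}" "set B \<inter> set C = {}"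
    "u \<notin> set A" "u \<notin> set B" "u \<notin> set C" "v \<notin> set A" "v \<notin> set B" "v \<notin> set C" "u \<noteq> v"
    using d w by auto
  have yz: "y \<noteq> z" "y \<in> {u,v}" "z \<in> {u,v}" using uv disj(10) by (auto simp: doubleton_eq_iff)
  have mem: "hd A \<in> set A" "last A \<in> set A" "hd B \<in> set B" "last B \<in> set B" "hd C \<in> set C" "last C \<in> set C"
    using neA neB neC by auto
  have hl: "hd A \<noteq> last A" "hd B \<noteq> last B" "hd C \<noteq> last C"
    using hd_last_ne dA dB dC lA lB lC by auto
  have sN: "set N = set w"
  proof -
    have "set N = {y,z} \<union> (set A \<union> set B \<union> set C)" using N by auto
    moreover have "set w = {u,v} \<union> (set A \<union> set B \<union> set C)" using w by auto
    ultimately show ?thesis using uv by simp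
  qed
  have lN: "length N = length w" using N w by simp
  have dN: "distinct N" using sN lN d by (metis card_distinct distinct_card)
  let ?P = "pe A \<union> pe B \<union> pe C"
  let ?New = "{{last A, last B}, {hd B, hd C}, {last C, y}, {y,z}, {z, hd A}}"
  let ?Old = "{{last A,u},{u,hd B},{last B,v},{v,hd C},{last C,hd A}}"
  have cN: "cycle_edges N = ?P \<union> ?New"
  proof -
    have "cycle_edges N = pe N \<union> {{z, hd A}}" using N neA by (subst cyc_pe) auto
    moreover have "pe N = ?P \<union> {{last A, last B}, {hd B, hd C}, {last C, y}, {y,z}}"
      using N neA neB neC
      by (simp add: pe_append pe_rev hd_rev last_rev pe_Cons) blast
    ultimately show ?thesis by (simp only: un5)
  qed
  have cW: "cycle_edges w = ?P \<union> ?Old"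
  proof -
    have "cycle_edges w = pe w \<union> {{last C, hd A}}" using w neA neC by (subst cyc_pe) auto
    moreover have "pe w = ?P \<union> {{last A,u},{u,hd B},{last B,v},{v,hd C}}"
      using w neA neB neC
      by (simp add: pe_append pe_Cons) blast
    ultimately show ?thesis by (simp only: un5)
  qed
  have yn: "y \<notin> set A" "y \<notin> set B" "y \<notin> set C" "z \<notin> set A" "z \<notin> set B" "z \<notin> set C"
    using yz disj by auto
  have dAB: "\<And>x x'. x \<in> set A \<Longrightarrow> x' \<in> set B \<Longrightarrow> x \<noteq> x'" using disj(1) by blast
  have dAC: "\<And>x x'. x \<in> set A \<Longrightarrow> x' \<in> set C \<Longrightarrow> x \<noteq> x'" using disj(2) by blast
  have dBC: "\<And>x x'. x \<in> set B \<Longrightarrow> x' \<in> set C \<Longrightarrow> x \<noteq> x'" using disj(3) by blast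
  have nin: "\<And>x x' S. x \<in> S \<Longrightarrow> x' \<notin> S \<Longrightarrow> x \<noteq> x'" by blast
  have dist8: "hd A \<noteq> last A" "hd A \<noteq> hd B" "hd A \<noteq> last B" "hd A \<noteq> hd C" "hd A \<noteq> last C" "hd A \<noteq> y" "hd A \<noteq> z" "last A \<noteq> hd B" "last A \<noteq> last B" "last A \<noteq> hd C" "last A \<noteq> last C" "last A \<noteq> y" "last A \<noteq> z" "hd B \<noteq> last B" "hd B \<noteq> hd C" "hd B \<noteq> last C" "hd B \<noteq> y" "hd B \<noteq> z" "last B \<noteq> hd C" "last B \<noteq> last C" "last B \<noteq> y" "last B \<noteq> z" "hd C \<noteq> last C" "hd C \<noteq> y" "hd C \<noteq> z" "last C \<noteq> y" "last C \<noteq> z" "y \<noteq> z"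
  proof -
    show "hd A \<noteq> last A" using hl(1) by simp
    show "hd A \<noteq> hd B" by (rule dAB[OF mem(1) mem(3)])
    show "hd A \<noteq> last B" by (rule dAB[OF mem(1) mem(4)])
    show "hd A \<noteq> hd C" by (rule dAC[OF mem(1) mem(5)])
    show "hd A \<noteq> last C" by (rule dAC[OF mem(1) mem(6)])
    show "hd A \<noteq> y" by (rule nin[OF mem(1)]) (use yn in simp)
    show "hd A \<noteq> z" by (rule nin[OF mem(1)]) (use yn in simp)
    show "last A \<noteq> hd B" by (rule dAB[OF mem(2) mem(3)])
    show "last A \<noteq> last B" by (rule dAB[OF mem(2) mem(4)])
    show "last A \<noteq> hd C" by (rule dAC[OF mem(2) mem(5)])
    show "last A \<noteq> last C" by (rule dAC[OF mem(2) mem(6)])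
    show "last A \<noteq> y" by (rule nin[OF mem(2)]) (use yn in simp)
    show "last A \<noteq> z" by (rule nin[OF mem(2)]) (use yn in simp)
    show "hd B \<noteq> last B" using hl(2) by simp
    show "hd B \<noteq> hd C" by (rule dBC[OF mem(3) mem(5)])
    show "hd B \<noteq> last C" by (rule dBC[OF mem(3) mem(6)])
    show "hd B \<noteq> y" by (rule nin[OF mem(3)]) (use yn in simp)
    show "hd B \<noteq> z" by (rule nin[OF mem(3)]) (use yn in simp)
    show "last B \<noteq> hd C" by (rule dBC[OF mem(4) mem(5)])
    show "last B \<noteq> last C" by (rule dBC[OF mem(4) mem(6)])
    show "last B \<noteq> y" by (rule nin[OF mem(4)]) (use yn in simp)
    show "last B \<noteq> z" by (rule nin[OF mem(4)]) (use yn in simp)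
    show "hd C \<noteq> last C" using hl(3) by simp
    show "hd C \<noteq> y" by (rule nin[OF mem(5)]) (use yn in simp)
    show "hd C \<noteq> z" by (rule nin[OF mem(5)]) (use yn in simp)
    show "last C \<noteq> y" by (rule nin[OF mem(6)]) (use yn in simp)
    show "last C \<noteq> z" by (rule nin[OF mem(6)]) (use yn in simp)
    show "y \<noteq> z" using yz(1) by simp
  qed
  have cNc: "f \<in> pe A \<or> f \<in> pe B \<or> f \<in> pe C \<or> f = {last A, last B} \<or> f = {hd B, hd C} \<or>
      f = {last C, y} \<or> f = {y,z} \<or> f = {z, hd A}" if "f \<in> cycle_edges N" for f
    using that unfolding cN by (rule mem8)
  have cWc: "f \<in> pe A \<or> f \<in> pe B \<or> f \<in> pe C \<or> f = {last A, u} \<or> f = {u, hd B} \<or>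
      f = {last B, v} \<or> f = {v, hd C} \<or> f = {last C, hd A}" if "f \<in> cycle_edges w" for f
    using that unfolding cW by (rule mem8)
  have PsubW: "f \<in> cycle_edges w" if "f \<in> pe A \<or> f \<in> pe B \<or> f \<in> pe C" for f
    using that unfolding cW by (rule mem3)
  have PsubN: "f \<in> cycle_edges N" if "f \<in> pe A \<or> f \<in> pe B \<or> f \<in> pe C" for f
    using that unfolding cN by (rule mem3)
  have eN: "e \<in> cycle_edges N"
  proof -
    have "e \<in> pe A \<or> e \<in> pe B \<or> e \<in> pe C" using cWc[OF e(1)] e(2) by blast
    then show ?thesis by (rule PsubN)
  qed
  have hP: "{last C, hd A} \<notin> pe A" "{last C, hd A} \<notin> pe B" "{last C, hd A} \<notin> pe C"
    using pe_subset[of "{last C, hd A}"] disj mem by blast+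
  have BE: "cycle_edges N - E \<subseteq> (cycle_edges w - E) - {{last C, hd A}}"
  proof
    fix f assume f: "f \<in> cycle_edges N - E"
    then have "f \<notin> E" by blast
    then have "f \<in> pe A \<or> f \<in> pe B \<or> f \<in> pe C" using cNc[of f] f E1 E2 E3 E4 E5 by blast
    then show "f \<in> (cycle_edges w - E) - {{last C, hd A}}" using PsubW[of f] hP \<open>f \<notin> E\<close> by blast
  qed
  let ?Ch = "{hd A, last A, hd B, last B, hd C, last C, y, z}"
  have nA: "f \<notin> pe A" if "x \<in> f" "x \<notin> set A" for f x using that pe_subset by blast
  have nB: "f \<notin> pe B" if "x \<in> f" "x \<notin> set B" for f x using that pe_subset by blast
  have nC: "f \<notin> pe C" if "x \<in> f" "x \<notin> set C" for f x using that pe_subset by blast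
  have out1: "hd A \<notin> BadV F N"
  proof (rule notBadV[OF sub2I c1])
    fix f assume f: "f \<in> cycle_edges N" "hd A \<in> f" "f \<noteq> {z, hd A}"
    have "f \<in> pe A"
      using cNc[OF f(1)] f(2,3) nB[OF f(2)] nC[OF f(2)] disj mem dist8 by auto
    then show "f = {hd A, A!1}" using pe_hd[OF dA] f by blast
  qed
  have out2: "last A \<notin> BadV F N"
  proof (rule notBadV[OF sub2I c2])
    fix f assume f: "f \<in> cycle_edges N" "last A \<in> f" "f \<noteq> {last A, last B}"
    have "f \<in> pe A"
      using cNc[OF f(1)] f(2,3) nB[OF f(2)] nC[OF f(2)] disj mem dist8 by auto
    then show "f = {A!(length A - 2), last A}" using pe_last[OF dA] f by blast
  qed
  have out3: "hd B \<notin> BadV F N"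
  proof (rule notBadV[OF sub2I c3])
    fix f assume f: "f \<in> cycle_edges N" "hd B \<in> f" "f \<noteq> {hd B, hd C}"
    have "f \<in> pe B"
      using cNc[OF f(1)] f(2,3) nA[OF f(2)] nC[OF f(2)] disj mem dist8 by auto
    then show "f = {hd B, B!1}" using pe_hd[OF dB] f by blast
  qed
  have out4: "last B \<notin> BadV F N"
  proof (rule notBadV[OF sub2I c4])
    fix f assume f: "f \<in> cycle_edges N" "last B \<in> f" "f \<noteq> {last A, last B}"
    have "f \<in> pe B"
      using cNc[OF f(1)] f(2,3) nA[OF f(2)] nC[OF f(2)] disj mem dist8 by auto
    then show "f = {B!(length B - 2), last B}" using pe_last[OF dB] f by blast
  qed
  have out5: "hd C \<notin> BadV F N"
  proof (rule notBadV[OF sub2I c5])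
    fix f assume f: "f \<in> cycle_edges N" "hd C \<in> f" "f \<noteq> {hd B, hd C}"
    have "f \<in> pe C"
      using cNc[OF f(1)] f(2,3) nA[OF f(2)] nB[OF f(2)] disj mem dist8 by auto
    then show "f = {hd C, C!1}" using pe_hd[OF dC] f by blast
  qed
  have out6: "last C \<notin> BadV F N"
  proof (rule notBadV[OF sub2I c6])
    fix f assume f: "f \<in> cycle_edges N" "last C \<in> f" "f \<noteq> {last C, y}"
    have "f \<in> pe C"
      using cNc[OF f(1)] f(2,3) nA[OF f(2)] nB[OF f(2)] disj mem dist8 by auto
    then show "f = {C!(length C - 2), last C}" using pe_last[OF dC] f by blast
  qed
  have out7: "y \<notin> BadV F N"
  proof (rule notBadV[OF sub2I c7])
    fix f assume f: "f \<in> cycle_edges N" "y \<in> f" "f \<noteq> {y, z}"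
    show "f = {last C, y}"
      using cNc[OF f(1)] f(2,3) nA[OF f(2)] nB[OF f(2)] nC[OF f(2)] yn dist8 by auto
  qed
  have out8: "z \<notin> BadV F N"
  proof (rule notBadV[OF sub2I c8])
    fix f assume f: "f \<in> cycle_edges N" "z \<in> f" "f \<noteq> {z, hd A}"
    show "f = {y, z}"
      using cNc[OF f(1)] f(2,3) nA[OF f(2)] nB[OF f(2)] nC[OF f(2)] yn dist8 by auto
  qed
  have same: "x \<in> BadV F N \<longleftrightarrow> x \<in> BadV F w" if x: "x \<notin> ?Ch" for x
  proof (rule BadV_same)
    have xs: "x \<noteq> hd A" "x \<noteq> last A" "x \<noteq> hd B" "x \<noteq> last B" "x \<noteq> hd C" "x \<noteq> last C" "x \<noteq> u" "x \<noteq> v"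
      using x yz by auto
    show "{f\<in>cycle_edges N. x \<in> f} = {f\<in>cycle_edges w. x \<in> f}"
    proof safe
      fix f assume f: "f \<in> cycle_edges N" "x \<in> f"
      then have "f \<in> pe A \<or> f \<in> pe B \<or> f \<in> pe C" using cNc[OF f(1)] xs x by auto
      then show "f \<in> cycle_edges w" by (rule PsubW)
    next
      fix f assume f: "f \<in> cycle_edges w" "x \<in> f"
      then have "f \<in> pe A \<or> f \<in> pe B \<or> f \<in> pe C" using cWc[OF f(1)] xs by auto
      then show "f \<in> cycle_edges N" by (rule PsubN)
    qed
  qed
  have BV: "BadV F N \<subseteq> BadV F w - ?Ch"
  proof
    fix x assume x: "x \<in> BadV F N"
    then have "x \<notin> ?Ch" using out1 out2 out3 out4 out5 out6 out7 out8 by auto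
    then show "x \<in> BadV F w - ?Ch" using same x by blast
  qed
  have fin1: "finite (cycle_edges w - E)" using cyc_finite by blast
  have le1: "card (cycle_edges N - E) \<le> card (cycle_edges w - E)"
    by (rule card_mono[OF fin1]) (use BE in blast)
  have le2: "card (BadV F N) \<le> card (BadV F w)"
    by (rule card_mono[OF BadV_finite]) (use BV in blast)
  have "card (cycle_edges N - E) < card (cycle_edges w - E) \<or> card (BadV F N) < card (BadV F w)"
  proof -
    from bad consider "{last C, hd A} \<notin> E" | "hd A \<in> BadV F w" | "last C \<in> BadV F w" by blast
    then show ?thesis
    proof cases
      case 1
      then have "{last C, hd A} \<in> cycle_edges w - E" using cW by blast
      then have "cycle_edges N - E \<subset> cycle_edges w - E" using BE by blast
      then show ?thesis by (intro disjI1 psubset_card_mono[OF fin1])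
    next
      case 2
      then have "BadV F N \<subset> BadV F w" using BV by blast
      then show ?thesis by (intro disjI2 psubset_card_mono[OF BadV_finite])
    next
      case 3
      then have "BadV F N \<subset> BadV F w" using BV by blast
      then show ?thesis by (intro disjI2 psubset_card_mono[OF BadV_finite])
    qed
  qed
  then have "Phi E F N < Phi E F w" using le1 le2 unfolding Phi_def by linarith
  then show ?thesis using dN sN eN by blast
qed

lemma incomp_at:
  assumes sys: "incompatibility_system E F" and i: "incompatible F f g" and v: "v \<in> f" "v \<in> g"
  shows "f \<in> E \<and> g \<in> E \<and> f \<noteq> g \<and> {f,g} \<in> F v"
proof -
  obtain x where x: "{f,g} \<in> F x" using i by (auto simp: incompatible_def)
  have H: "\<exists>c d. {f,g} = {c,d} \<and> c \<in> E \<and> d \<in> E \<and> c \<noteq> d \<and> c \<inter> d = {x}"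
    using sys x unfolding incompatibility_system_def by (elim allE ballE) auto
  then obtain c d where cd: "{f,g} = {c,d}" "c \<in> E" "d \<in> E" "c \<noteq> d" "c \<inter> d = {x}"
    by (elim exE conjE) auto
  then have "(f = c \<and> g = d) \<or> (f = d \<and> g = c)" by (auto simp: doubleton_eq_iff)
  then have fg: "f \<in> E" "g \<in> E" "f \<noteq> g" "f \<inter> g = {x}" using cd by auto
  have "v \<in> f \<inter> g" using v by blast
  then have "v = x" using fg(4) by blast
  then show ?thesis using fg x by simp
qed

lemma incomp_bound:
  assumes sys: "incompatibility_system E F" and bnd: "bounded_system \<Delta> E F" and fin: "finite E"
    and D0: "0 \<le> \<Delta>"
    and inj: "inj_on g R" and vg: "\<And>r. r \<in> R \<Longrightarrow> v \<in> g r" and vf: "v \<in> f"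
  shows "real (card {r\<in>R. incompatible F f (g r)}) \<le> \<Delta>"
proof (cases "{r\<in>R. incompatible F f (g r)} = {}")
  case True then show ?thesis using D0 by (metis card.empty of_nat_0)
next
  case False
  then obtain r0 where "r0 \<in> R" "incompatible F f (g r0)" by auto
  then have fE: "f \<in> E" using incomp_at[OF sys] vg vf by blast
  let ?T = "{e'\<in>E. e' \<noteq> f \<and> v \<in> e' \<and> {f, e'} \<in> F v}"
  have "g ` {r\<in>R. incompatible F f (g r)} \<subseteq> ?T"
    using incomp_at[OF sys] vg vf by fastforce
  moreover have "inj_on g {r\<in>R. incompatible F f (g r)}" using inj by (rule inj_on_subset) auto
  ultimately have "card {r\<in>R. incompatible F f (g r)} \<le> card ?T"
    using fin by (metis (no_types, lifting) card_inj_on_le finite_subset mem_Collect_eq subsetI)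
  moreover have "real (card ?T) \<le> \<Delta>" using bnd fE vf unfolding bounded_system_def by blast
  ultimately show ?thesis by linarith
qed

lemma fiber1:
  assumes "finite A" "finite B" "S \<subseteq> A \<times> B" "\<And>p. p \<in> A \<Longrightarrow> real (card {r. (p,r) \<in> S}) \<le> k"
  shows "real (card S) \<le> k * real (card A)"
proof -
  have eq: "S = Sigma A (\<lambda>p. {r. (p,r) \<in> S})" using assms(3) by auto
  have fin: "\<forall>p\<in>A. finite {r. (p,r) \<in> S}"
  proof
    fix p show "finite {r. (p,r) \<in> S}" by (rule finite_subset[OF _ assms(2)]) (use assms(3) in auto)
  qed
  have "card S = card (Sigma A (\<lambda>p. {r. (p,r) \<in> S}))" using eq by simp
  also have "\<dots> = (\<Sum>p\<in>A. card {r. (p,r) \<in> S})" by (rule card_SigmaI[OF assms(1) fin])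
  finally have "card S = (\<Sum>p\<in>A. card {r. (p,r) \<in> S})" .
  then have "real (card S) = (\<Sum>p\<in>A. real (card {r. (p,r) \<in> S}))" by simp
  also have "\<dots> \<le> (\<Sum>p\<in>A. k)" by (rule sum_mono) (use assms(4) in auto)
  finally show ?thesis by (simp add: mult.commute)
qed

lemma fiber2:
  assumes "finite A" "finite B" "S \<subseteq> A \<times> B" "\<And>r. r \<in> B \<Longrightarrow> real (card {p. (p,r) \<in> S}) \<le> k"
  shows "real (card S) \<le> k * real (card B)"
proof -
  have "real (card (prod.swap ` S)) \<le> k * real (card B)"
  proof (rule fiber1[OF assms(2,1)])
    show "prod.swap ` S \<subseteq> B \<times> A" using assms(3) by auto
    fix r assume "r \<in> B"
    have "{p. (r,p) \<in> prod.swap ` S} = {p. (p,r) \<in> S}" by force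
    then show "real (card {p. (r,p) \<in> prod.swap ` S}) \<le> k" using assms(4)[OF \<open>r \<in> B\<close>] by simp
  qed
  moreover have "card (prod.swap ` S) = card S" by (simp add: card_image)
  ultimately show ?thesis by simp
qed

lemma card_Un4: "card (A \<union> B \<union> C \<union> D) \<le> card A + card B + card C + card D"
  using card_Un_le[of "A \<union> B \<union> C" D] card_Un_le[of "A \<union> B" C] card_Un_le[of A B] by linarith

lemma card_Un10: "card (A1 \<union> A2 \<union> A3 \<union> A4 \<union> A5 \<union> A6 \<union> A7 \<union> A8 \<union> A9 \<union> A10) \<le>
  card A1 + card A2 + card A3 + card A4 + card A5 + card A6 + card A7 + card A8 + card A9 + card A10"
  using card_Un_le[of "A1 \<union> A2 \<union> A3 \<union> A4 \<union> A5 \<union> A6 \<union> A7 \<union> A8 \<union> A9" A10]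
    card_Un_le[of "A1 \<union> A2 \<union> A3 \<union> A4 \<union> A5 \<union> A6 \<union> A7 \<union> A8" A9]
    card_Un_le[of "A1 \<union> A2 \<union> A3 \<union> A4 \<union> A5 \<union> A6 \<union> A7" A8]
    card_Un_le[of "A1 \<union> A2 \<union> A3 \<union> A4 \<union> A5 \<union> A6" A7]
    card_Un_le[of "A1 \<union> A2 \<union> A3 \<union> A4 \<union> A5" A6]
    card_Un_le[of "A1 \<union> A2 \<union> A3 \<union> A4" A5]
    card_Un_le[of "A1 \<union> A2 \<union> A3" A4] card_Un_le[of "A1 \<union> A2" A3] card_Un_le[of A1 A2]
  by linarith

lemma sg_edge': "simple_graph V E \<Longrightarrow> f \<in> E \<Longrightarrow> \<exists>u v. f = {u,v} \<and> u \<noteq> v \<and> u \<in> V \<and> v \<in> V"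
  unfolding simple_graph_def by (elim conjE) (drule bspec, assumption)

lemma sg_finE: "simple_graph V E \<Longrightarrow> finite E"
proof -
  assume sg: "simple_graph V E"
  have "E \<subseteq> Pow V"
  proof
    fix f assume "f \<in> E"
    then obtain u v where "f = {u,v}" "u \<in> V" "v \<in> V" using sg_edge'[OF sg \<open>f \<in> E\<close>] by (elim exE conjE) auto
    then show "f \<in> Pow V" by simp
  qed
  moreover have "finite V" using sg unfolding simple_graph_def by simp
  ultimately show ?thesis using finite_subset by (metis finite_Pow_iff)
qed

lemma sg_edge: "simple_graph V E \<Longrightarrow> {x,y} \<in> E \<Longrightarrow> x \<in> V \<and> y \<in> V \<and> x \<noteq> y"
proof -
  assume sg: "simple_graph V E" and e: "{x,y} \<in> E"
  obtain u v where uv: "{x,y} = {u,v}" "u \<noteq> v" "u \<in> V" "v \<in> V" using sg_edge'[OF sg e] by (elim exE conjE) auto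
  then have "(x = u \<and> y = v) \<or> (x = v \<and> y = u)" by (simp add: doubleton_eq_iff)
  then show ?thesis using uv by auto
qed

lemma G_bound:
  assumes sg: "simple_graph V E" and sys: "incompatibility_system E F"
    and bnd: "bounded_system (\<mu> * real n) E F" and mu: "\<mu> > 0"
    and d: "distinct w" and sw: "set w = V" and lw: "length w = n"
    and c: "c \<in> f0" and ce: "card e = 2"
  shows "real (degree E c) \<le> real (card {p. 2 \<le> p \<and> p+3 \<le> n \<and> {c, w!p} \<in> E \<and> \<not> incompatible F f0 {c, w!p} \<and> w!p \<notin> e}) + 6 + \<mu> * real n"
proof -
  let ?G = "{p. 2 \<le> p \<and> p+3 \<le> n \<and> {c, w!p} \<in> E \<and> \<not> incompatible F f0 {c, w!p} \<and> w!p \<notin> e}"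
  let ?S = "{p. p < n \<and> {c, w!p} \<in> E}"
  let ?T2 = "{p\<in>{..<n}. incompatible F f0 ((\<lambda>p. {c, w!p}) p)}"
  let ?T3 = "{p\<in>{..<n}. w!p \<in> e}"
  have finE: "finite E" using sg by (rule sg_finE)
  have inj: "inj_on ((!) w) {..<n}" using d lw by (simp add: inj_on_nth)
  have img: "(!) w ` ?S = {u. {u, c} \<in> E}"
  proof safe
    fix p assume "p < n" "{c, w!p} \<in> E" then show "{w!p, c} \<in> E" by (simp add: insert_commute)
  next
    fix u assume u: "{u,c} \<in> E"
    then have "u \<in> set w" using sg_edge[OF sg] sw by blast
    then obtain p where "p < n" "w!p = u" using lw by (auto simp: in_set_conv_nth)
    then show "u \<in> (!) w ` ?S" using u by (auto simp: insert_commute)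
  qed
  have injS: "inj_on ((!) w) ?S" using inj by (rule inj_on_subset) auto
  have "degree E c = card ((!) w ` ?S)" unfolding degree_def img by simp
  also have "\<dots> = card ?S" by (rule card_image[OF injS])
  finally have degS: "degree E c = card ?S" .
  have sub: "?S \<subseteq> ?G \<union> set [0,1,n-2,n-1] \<union> ?T2 \<union> ?T3" by auto
  have "card ?S \<le> card (?G \<union> set [0,1,n-2,n-1] \<union> ?T2 \<union> ?T3)"
    by (rule card_mono[OF _ sub], rule finite_subset[of _ "{..n+1}"]) auto
  also have "\<dots> \<le> card ?G + card (set [0,1,n-2,n-1]) + card ?T2 + card ?T3"
    by (rule card_Un4)
  finally have c1: "card ?S \<le> card ?G + card (set [0,1,n-2,n-1]) + card ?T2 + card ?T3" .
  have c2: "card (set [0,1,n-2,n-1]) \<le> 4" using card_length[of "[0,1,n-2,n-1]"] by simp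
  have c3: "card ?T3 \<le> 2"
  proof -
    have "(!) w ` ?T3 \<subseteq> e" by auto
    moreover have "inj_on ((!) w) ?T3" using inj by (rule inj_on_subset) auto
    moreover have "finite e" using ce card.infinite by force
    ultimately have "card ?T3 \<le> card e" by (intro card_inj_on_le)
    then show ?thesis using ce by simp
  qed
  have c4: "real (card ?T2) \<le> \<mu> * real n"
  proof (rule incomp_bound[OF sys bnd finE])
    show "0 \<le> \<mu> * real n" using mu by simp
    show "inj_on (\<lambda>p. {c, w!p}) {..<n}"
    proof (rule inj_onI)
      fix p q assume "p \<in> {..<n}" "q \<in> {..<n}" "{c, w!p} = {c, w!q}"
      then have "w!p = w!q" by (auto simp: doubleton_eq_iff)
      then show "p = q" using inj \<open>p \<in> {..<n}\<close> \<open>q \<in> {..<n}\<close> by (meson inj_onD)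
    qed
  qed (use c in auto)
  show ?thesis using degS c1 c2 c3 c4 by linarith
qed

lemma inj_dbl:
  assumes "distinct w" "\<And>r. r \<in> R \<Longrightarrow> h r < length w" "inj_on h R"
  shows "inj_on (\<lambda>r. {x, w!(h r)}) R"
proof (rule inj_onI)
  fix p q assume pq: "p \<in> R" "q \<in> R" "{x, w!(h p)} = {x, w!(h q)}"
  then have "w!(h p) = w!(h q)" by (auto simp: doubleton_eq_iff)
  then have "h p = h q" using assms pq by (simp add: nth_eq_iff_index_eq)
  then show "p = q" using assms(3) pq by (meson inj_onD)
qed

lemma fib_inc:
  assumes sys: "incompatibility_system E F" and bnd: "bounded_system \<Delta> E F" and finE: "finite E"
    and D0: "0 \<le> \<Delta>" and fin: "finite R"
    and inj: "inj_on g R" and vg: "\<And>r. r \<in> R \<Longrightarrow> v \<in> g r" and vf: "v \<in> f"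
    and sub: "{r. P r} \<subseteq> {r\<in>R. incompatible F f (g r)}"
  shows "real (card {r. P r}) \<le> \<Delta>"
proof -
  have "card {r. P r} \<le> card {r\<in>R. incompatible F f (g r)}"
    by (rule card_mono[OF _ sub]) (use fin in auto)
  moreover have "real (card {r\<in>R. incompatible F f (g r)}) \<le> \<Delta>"
    by (rule incomp_bound[OF sys bnd finE D0 inj vg vf])
  ultimately show ?thesis by linarith
qed

lemma NE_le:
  assumes "inj_on \<phi> S" "\<phi> ` S \<subseteq> NE" "finite NE"
  shows "card S \<le> card NE"
  using assms card_inj_on_le by blast

lemma find_pr:
  assumes sg: "simple_graph V E" and sys: "incompatibility_system E F"
    and bnd: "bounded_system (\<mu> * real n) E F" and mu: "\<mu> > 0"
    and d: "distinct w" and sw: "set w = V" and lw: "length w = n"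
    and NE: "real (card {(x,y). x\<in>V \<and> y\<in>V \<and> x\<noteq>y \<and> {x,y}\<notin>E}) \<le> 2 * M"
    and degb: "D \<le> real (degree E (w!(n-1)))" and dega: "D \<le> real (degree E (w!0))"
    and X0: "0 \<le> D - 6 - \<mu> * real n"
    and ineq: "5 * real n + 6 * M + 6 * (\<mu> * real n) * real n < (D - 6 - \<mu> * real n)^2"
    and ce: "card e = 2"
  shows "\<exists>p r. 2 \<le> p \<and> p+3 \<le> n \<and> 2 \<le> r \<and> r+3 \<le> n \<and> (p+3 \<le> r \<or> r+3 \<le> p) \<and>
     {w!(n-1), w!p} \<in> E \<and> {w!0, w!r} \<in> E \<and> {w!p, w!r} \<in> E \<and> {w!(p-1), w!(r-1)} \<in> E \<and>
     {w!(p+1), w!(r+1)} \<in> E \<and>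
     \<not> incompatible F {w!(n-2), w!(n-1)} {w!(n-1), w!p} \<and>
     \<not> incompatible F {w!1, w!0} {w!0, w!r} \<and>
     \<not> incompatible F {w!(n-1), w!p} {w!p, w!r} \<and>
     \<not> incompatible F {w!r, w!0} {w!r, w!p} \<and>
     \<not> incompatible F {w!(p-2), w!(p-1)} {w!(p-1), w!(r-1)} \<and>
     \<not> incompatible F {w!(r-2), w!(r-1)} {w!(r-1), w!(p-1)} \<and>
     \<not> incompatible F {w!(p+1), w!(p+2)} {w!(p+1), w!(r+1)} \<and>
     \<not> incompatible F {w!(r+1), w!(r+2)} {w!(r+1), w!(p+1)} \<and>
     w!p \<notin> e \<and> w!r \<notin> e"
proof -
  have finE: "finite E" using sg by (rule sg_finE)
  have mn0: "0 \<le> \<mu> * real n" using mu by simp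
  define Gp where "Gp = {p. 2 \<le> p \<and> p+3 \<le> n \<and> {w!(n-1), w!p} \<in> E \<and> \<not> incompatible F {w!(n-2), w!(n-1)} {w!(n-1), w!p} \<and> w!p \<notin> e}"
  define Gr where "Gr = {p. 2 \<le> p \<and> p+3 \<le> n \<and> {w!0, w!p} \<in> E \<and> \<not> incompatible F {w!1, w!0} {w!0, w!p} \<and> w!p \<notin> e}"
  have gp: "D \<le> real (card Gp) + 6 + \<mu> * real n"
    using G_bound[OF sg sys bnd mu d sw lw, of "w!(n-1)" "{w!(n-2), w!(n-1)}" e] ce degb
    unfolding Gp_def by simp
  have gr: "D \<le> real (card Gr) + 6 + \<mu> * real n"
    using G_bound[OF sg sys bnd mu d sw lw, of "w!0" "{w!1, w!0}" e] ce dega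
    unfolding Gr_def by simp
  have Gpn: "Gp \<subseteq> {..<n}" and Grn: "Gr \<subseteq> {..<n}" unfolding Gp_def Gr_def by auto
  have finGp: "finite Gp" and finGr: "finite Gr" using Gpn Grn finite_subset by auto
  have cGp: "real (card Gp) \<le> real n" and cGr: "real (card Gr) \<le> real n"
    using card_mono[OF _ Gpn] card_mono[OF _ Grn] by auto
  define U where "U = Gp \<times> Gr"
  have finU: "finite U" unfolding U_def using finGp finGr by simp
  have Ulo: "\<And>p r. (p,r) \<in> U \<Longrightarrow> 2 \<le> p \<and> p+3 \<le> n \<and> 2 \<le> r \<and> r+3 \<le> n"
    unfolding U_def Gp_def Gr_def by auto
  have injw: "\<And>i j. i < n \<Longrightarrow> j < n \<Longrightarrow> w!i = w!j \<longleftrightarrow> i = j" using d lw by (simp add: nth_eq_iff_index_eq)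
  let ?NE = "{(x,y). x\<in>V \<and> y\<in>V \<and> x\<noteq>y \<and> {x,y}\<notin>E}"
  have finNE: "finite ?NE"
  proof -
    have "finite V" using sg unfolding simple_graph_def by blast
    then have "finite (V \<times> V)" by simp
    moreover have "?NE \<subseteq> V \<times> V" by auto
    ultimately show ?thesis by (rule finite_subset[rotated])
  qed
  have wV: "\<And>i. i < n \<Longrightarrow> w!i \<in> V" using sw lw by auto
  define B1 where "B1 = {(p,r)\<in>U. p \<le> r + 2 \<and> r \<le> p + 2}"
  define B2 where "B2 = {(p,r)\<in>U. p \<noteq> r \<and> {w!p, w!r} \<notin> E}"
  define B3 where "B3 = {(p,r)\<in>U. p \<noteq> r \<and> {w!(p-1), w!(r-1)} \<notin> E}"
  define B4 where "B4 = {(p,r)\<in>U. p \<noteq> r \<and> {w!(p+1), w!(r+1)} \<notin> E}"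
  define B5 where "B5 = {(p,r)\<in>U. incompatible F {w!(n-1), w!p} {w!p, w!r}}"
  define B6 where "B6 = {(p,r)\<in>U. incompatible F {w!r, w!0} {w!r, w!p}}"
  define B7 where "B7 = {(p,r)\<in>U. incompatible F {w!(p-2), w!(p-1)} {w!(p-1), w!(r-1)}}"
  define B8 where "B8 = {(p,r)\<in>U. incompatible F {w!(r-2), w!(r-1)} {w!(r-1), w!(p-1)}}"
  define B9 where "B9 = {(p,r)\<in>U. incompatible F {w!(p+1), w!(p+2)} {w!(p+1), w!(r+1)}}"
  define B10 where "B10 = {(p,r)\<in>U. incompatible F {w!(r+1), w!(r+2)} {w!(r+1), w!(p+1)}}"
  have b1: "real (card B1) \<le> 5 * real (card Gp)"
  proof (rule fiber1[OF finGp finGr])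
    show "B1 \<subseteq> Gp \<times> Gr" unfolding B1_def U_def by auto
    fix p assume "p \<in> Gp"
    have "{r. (p,r) \<in> B1} \<subseteq> {p-2..p+2}" unfolding B1_def by auto
    then have "card {r. (p,r) \<in> B1} \<le> card {p-2..p+2}" by (rule card_mono[rotated]) auto
    also have "\<dots> \<le> 5" by simp
    finally show "real (card {r. (p,r) \<in> B1}) \<le> 5" by simp
  qed
  have b2: "real (card B2) \<le> 2 * M"
  proof -
    have "card B2 \<le> card ?NE"
    proof (rule NE_le[OF _ _ finNE])
      show "inj_on (\<lambda>(p,r). (w!p, w!r)) B2"
        by (rule inj_onI) (auto simp: B2_def dest!: Ulo simp: injw)
      show "(\<lambda>(p,r). (w!p, w!r)) ` B2 \<subseteq> ?NE"
        by (auto simp: B2_def dest!: Ulo simp: injw wV)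
    qed
    then show ?thesis using NE by linarith
  qed
  have b3: "real (card B3) \<le> 2 * M"
  proof -
    have "card B3 \<le> card ?NE"
    proof (rule NE_le[OF _ _ finNE])
      show "inj_on (\<lambda>(p,r). (w!(p-1), w!(r-1))) B3"
        by (rule inj_onI) (auto simp: B3_def dest!: Ulo simp: injw)
      show "(\<lambda>(p,r). (w!(p-1), w!(r-1))) ` B3 \<subseteq> ?NE"
        by (auto simp: B3_def dest!: Ulo simp: injw wV)
    qed
    then show ?thesis using NE by linarith
  qed
  have b4: "real (card B4) \<le> 2 * M"
  proof -
    have "card B4 \<le> card ?NE"
    proof (rule NE_le[OF _ _ finNE])
      show "inj_on (\<lambda>(p,r). (w!(p+1), w!(r+1))) B4"
        by (rule inj_onI) (auto simp: B4_def dest!: Ulo simp: injw)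
      show "(\<lambda>(p,r). (w!(p+1), w!(r+1))) ` B4 \<subseteq> ?NE"
        by (auto simp: B4_def dest!: Ulo simp: injw wV)
    qed
    then show ?thesis using NE by linarith
  qed
  have b5: "real (card B5) \<le> (\<mu> * real n) * real (card Gp)"
  proof (rule fiber1[OF finGp finGr])
    show "B5 \<subseteq> Gp \<times> Gr" unfolding B5_def U_def by auto
    fix p assume p: "p \<in> Gp"
    show "real (card {r. (p,r) \<in> B5}) \<le> \<mu> * real n"
    proof (rule fib_inc[OF sys bnd finE mn0 finGr, where g="\<lambda>r. {w!p, w!(id r)}" and v="w!p" and f="{w!(n-1), w!p}"])
      show "inj_on (\<lambda>r. {w!p, w!(id r)}) Gr" by (rule inj_dbl[OF d]) (use Grn lw in auto)
    qed (auto simp: B5_def U_def)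
  qed
  have b6: "real (card B6) \<le> (\<mu> * real n) * real (card Gr)"
  proof (rule fiber2[OF finGp finGr])
    show "B6 \<subseteq> Gp \<times> Gr" unfolding B6_def U_def by auto
    fix r assume r: "r \<in> Gr"
    show "real (card {p. (p,r) \<in> B6}) \<le> \<mu> * real n"
    proof (rule fib_inc[OF sys bnd finE mn0 finGp, where g="\<lambda>p. {w!r, w!(id p)}" and v="w!r" and f="{w!r, w!0}"])
      show "inj_on (\<lambda>p. {w!r, w!(id p)}) Gp" by (rule inj_dbl[OF d]) (use Gpn lw in auto)
    qed (auto simp: B6_def U_def)
  qed
  have b7: "real (card B7) \<le> (\<mu> * real n) * real (card Gp)"
  proof (rule fiber1[OF finGp finGr])
    show "B7 \<subseteq> Gp \<times> Gr" unfolding B7_def U_def by auto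
    fix p assume p: "p \<in> Gp"
    show "real (card {r. (p,r) \<in> B7}) \<le> \<mu> * real n"
    proof (rule fib_inc[OF sys bnd finE mn0 finGr, where g="\<lambda>r. {w!(p-1), w!(r-1)}" and v="w!(p-1)" and f="{w!(p-2), w!(p-1)}"])
      show "inj_on (\<lambda>r. {w!(p-1), w!(r-1)}) Gr"
        by (rule inj_dbl[OF d, of _ "\<lambda>r. r - 1"]) (use Grn lw in \<open>auto simp: Gr_def inj_on_def\<close>)
    qed (auto simp: B7_def U_def)
  qed
  have b8: "real (card B8) \<le> (\<mu> * real n) * real (card Gr)"
  proof (rule fiber2[OF finGp finGr])
    show "B8 \<subseteq> Gp \<times> Gr" unfolding B8_def U_def by auto
    fix r assume r: "r \<in> Gr"
    show "real (card {p. (p,r) \<in> B8}) \<le> \<mu> * real n"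
    proof (rule fib_inc[OF sys bnd finE mn0 finGp, where g="\<lambda>p. {w!(r-1), w!(p-1)}" and v="w!(r-1)" and f="{w!(r-2), w!(r-1)}"])
      show "inj_on (\<lambda>p. {w!(r-1), w!(p-1)}) Gp"
        by (rule inj_dbl[OF d, of _ "\<lambda>r. r - 1"]) (use Gpn lw in \<open>auto simp: Gp_def inj_on_def\<close>)
    qed (auto simp: B8_def U_def)
  qed
  have b9: "real (card B9) \<le> (\<mu> * real n) * real (card Gp)"
  proof (rule fiber1[OF finGp finGr])
    show "B9 \<subseteq> Gp \<times> Gr" unfolding B9_def U_def by auto
    fix p assume p: "p \<in> Gp"
    show "real (card {r. (p,r) \<in> B9}) \<le> \<mu> * real n"
    proof (rule fib_inc[OF sys bnd finE mn0 finGr, where g="\<lambda>r. {w!(p+1), w!(r+1)}" and v="w!(p+1)" and f="{w!(p+1), w!(p+2)}"])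
      show "inj_on (\<lambda>r. {w!(p+1), w!(r+1)}) Gr"
        by (rule inj_dbl[OF d, of _ "\<lambda>r. r + 1"]) (use Grn lw in \<open>auto simp: Gr_def inj_on_def\<close>)
    qed (auto simp: B9_def U_def)
  qed
  have b10: "real (card B10) \<le> (\<mu> * real n) * real (card Gr)"
  proof (rule fiber2[OF finGp finGr])
    show "B10 \<subseteq> Gp \<times> Gr" unfolding B10_def U_def by auto
    fix r assume r: "r \<in> Gr"
    show "real (card {p. (p,r) \<in> B10}) \<le> \<mu> * real n"
    proof (rule fib_inc[OF sys bnd finE mn0 finGp, where g="\<lambda>p. {w!(r+1), w!(p+1)}" and v="w!(r+1)" and f="{w!(r+1), w!(r+2)}"])
      show "inj_on (\<lambda>p. {w!(r+1), w!(p+1)}) Gp"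
        by (rule inj_dbl[OF d, of _ "\<lambda>r. r + 1"]) (use Gpn lw in \<open>auto simp: Gp_def inj_on_def\<close>)
    qed (auto simp: B10_def U_def)
  qed
  let ?X = "D - 6 - \<mu> * real n"
  have "?X * ?X \<le> real (card Gp) * real (card Gr)"
    using gp gr X0 by (intro mult_mono) auto
  then have cU: "?X^2 \<le> real (card U)" unfolding U_def by (simp add: power2_eq_square card_cartesian_product)
  have m1: "(\<mu> * real n) * real (card Gp) \<le> (\<mu> * real n) * real n" using cGp mn0 by (rule mult_left_mono)
  have m2: "(\<mu> * real n) * real (card Gr) \<le> (\<mu> * real n) * real n" using cGr mn0 by (rule mult_left_mono)
  have "\<not> U \<subseteq> B1 \<union> B2 \<union> B3 \<union> B4 \<union> B5 \<union> B6 \<union> B7 \<union> B8 \<union> B9 \<union> B10"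
  proof
    assume sub: "U \<subseteq> B1 \<union> B2 \<union> B3 \<union> B4 \<union> B5 \<union> B6 \<union> B7 \<union> B8 \<union> B9 \<union> B10"
    have subs: "B1 \<subseteq> U" "B2 \<subseteq> U" "B3 \<subseteq> U" "B4 \<subseteq> U" "B5 \<subseteq> U" "B6 \<subseteq> U" "B7 \<subseteq> U" "B8 \<subseteq> U" "B9 \<subseteq> U" "B10 \<subseteq> U"
      unfolding B1_def B2_def B3_def B4_def B5_def B6_def B7_def B8_def B9_def B10_def by auto
    have fins: "finite B1" "finite B2" "finite B3" "finite B4" "finite B5" "finite B6" "finite B7"
      "finite B8" "finite B9" "finite B10"
      by (rule finite_subset[OF subs(1) finU] finite_subset[OF subs(2) finU] finite_subset[OF subs(3) finU]
        finite_subset[OF subs(4) finU] finite_subset[OF subs(5) finU] finite_subset[OF subs(6) finU]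
        finite_subset[OF subs(7) finU] finite_subset[OF subs(8) finU] finite_subset[OF subs(9) finU]
        finite_subset[OF subs(10) finU])+
    have "card U \<le> card (B1 \<union> B2 \<union> B3 \<union> B4 \<union> B5 \<union> B6 \<union> B7 \<union> B8 \<union> B9 \<union> B10)"
      by (rule card_mono[OF _ sub]) (use fins in auto)
    also have "\<dots> \<le> card B1 + card B2 + card B3 + card B4 + card B5 + card B6 + card B7 + card B8 + card B9 + card B10"
      by (rule card_Un10)
    finally have "real (card U) \<le> real (card B1) + real (card B2) + real (card B3) + real (card B4) + real (card B5) + real (card B6) + real (card B7) + real (card B8) + real (card B9) + real (card B10)"
      by linarith
    then show False using b1 b2 b3 b4 b5 b6 b7 b8 b9 b10 m1 m2 cU ineq cGp by linarith
  qed
  then obtain p r where pr: "(p,r) \<in> U" "(p,r) \<notin> B1 \<union> B2 \<union> B3 \<union> B4 \<union> B5 \<union> B6 \<union> B7 \<union> B8 \<union> B9 \<union> B10"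
    by auto
  have "p \<noteq> r" using pr unfolding B1_def by auto
  then show ?thesis using pr
    unfolding B1_def B2_def B3_def B4_def B5_def B6_def B7_def B8_def B9_def B10_def U_def Gp_def Gr_def
    by (intro exI[of _ p] exI[of _ r]) auto
qed

lemma edge_card: "simple_graph V E \<Longrightarrow> f \<in> E \<Longrightarrow> card f = 2 \<and> f \<subseteq> V"
proof -
  assume sg: "simple_graph V E" "f \<in> E"
  obtain u v where "f = {u,v}" "u \<noteq> v" "u \<in> V" "v \<in> V" using sg_edge'[OF sg] by (elim exE conjE) auto
  then show ?thesis by simp
qed

lemma graph_facts:
  assumes sg: "simple_graph V E"
  shows "finite {t. t \<subseteq> V \<and> card t = 2}" "E \<subseteq> {t. t \<subseteq> V \<and> card t = 2}"
    "card {t. t \<subseteq> V \<and> card t = 2} = card V choose 2"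
proof -
  have fV: "finite V" using sg unfolding simple_graph_def by simp
  show "finite {t. t \<subseteq> V \<and> card t = 2}"
    by (rule finite_subset[of _ "Pow V"]) (use fV in auto)
  show "E \<subseteq> {t. t \<subseteq> V \<and> card t = 2}" using edge_card[OF sg] by blast
  show "card {t. t \<subseteq> V \<and> card t = 2} = card V choose 2" by (rule n_subsets[OF fV])
qed

lemma pair_card: "card t = 2 \<Longrightarrow> card {(x,y). x \<in> t \<and> y \<in> t \<and> x \<noteq> y} \<le> 2"
proof -
  assume "card t = 2"
  then obtain c d where cd: "t = {c,d}" "c \<noteq> d" by (auto simp: card_2_iff)
  have "{(x,y). x \<in> t \<and> y \<in> t \<and> x \<noteq> y} = set [(c,d),(d,c)]" using cd by auto
  then show ?thesis using card_length[of "[(c,d),(d,c)]"] by simp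
qed

lemma NE_bound:
  assumes sg: "simple_graph V E"
  shows "card {(x,y). x\<in>V \<and> y\<in>V \<and> x\<noteq>y \<and> {x,y}\<notin>E} \<le> 2 * card ({t. t \<subseteq> V \<and> card t = 2} - E)"
proof -
  let ?M = "{t. t \<subseteq> V \<and> card t = 2} - E"
  let ?P = "\<lambda>t. {(x,y). x \<in> t \<and> y \<in> t \<and> x \<noteq> y}"
  have finM: "finite ?M" using graph_facts(1)[OF sg] by simp
  have fV: "finite V" using sg unfolding simple_graph_def by simp
  have sub: "{(x,y). x\<in>V \<and> y\<in>V \<and> x\<noteq>y \<and> {x,y}\<notin>E} \<subseteq> (\<Union>t\<in>?M. ?P t)"
  proof
    fix p assume "p \<in> {(x,y). x\<in>V \<and> y\<in>V \<and> x\<noteq>y \<and> {x,y}\<notin>E}"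
    then obtain x y where p: "p = (x,y)" "x \<in> V" "y \<in> V" "x \<noteq> y" "{x,y} \<notin> E" by blast
    then have "{x,y} \<in> ?M" by auto
    moreover have "p \<in> ?P {x,y}" using p by auto
    ultimately show "p \<in> (\<Union>t\<in>?M. ?P t)" by blast
  qed
  have finU: "finite (\<Union>t\<in>?M. ?P t)"
  proof (rule finite_subset[of _ "V \<times> V"])
    show "(\<Union>t\<in>?M. ?P t) \<subseteq> V \<times> V" by auto
  qed (use fV in simp)
  have "card {(x,y). x\<in>V \<and> y\<in>V \<and> x\<noteq>y \<and> {x,y}\<notin>E} \<le> card (\<Union>t\<in>?M. ?P t)"
    by (rule card_mono[OF finU sub])
  also have "\<dots> \<le> (\<Sum>t\<in>?M. card (?P t))" by (rule card_UN_le[OF finM])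
  also have "\<dots> \<le> (\<Sum>t\<in>?M. 2)" by (rule sum_mono) (use pair_card in auto)
  finally show ?thesis by simp
qed

lemma deg_bound:
  assumes sg: "simple_graph V E" and v: "v \<in> V"
  shows "card V \<le> degree E v + card ({t. t \<subseteq> V \<and> card t = 2} - E) + 1"
proof -
  let ?M = "{t. t \<subseteq> V \<and> card t = 2} - E"
  let ?N = "{u. {u,v} \<in> E}"
  let ?Q = "(V - {v}) - ?N"
  have fV: "finite V" using sg unfolding simple_graph_def by simp
  have finM: "finite ?M" using graph_facts(1)[OF sg] by simp
  have NV: "?N \<subseteq> V - {v}" using sg_edge[OF sg] by blast
  have "inj_on (\<lambda>u. {u,v}) ?Q"
    by (rule inj_onI) (auto simp: doubleton_eq_iff)
  moreover have "(\<lambda>u. {u,v}) ` ?Q \<subseteq> ?M" using v by auto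
  ultimately have cQ: "card ?Q \<le> card ?M" using finM by (intro card_inj_on_le)
  have "card (V - {v}) \<le> card (?Q \<union> ?N)" by (rule card_mono) (use fV NV in \<open>auto intro: finite_subset\<close>)
  also have "\<dots> \<le> card ?Q + card ?N" by (rule card_Un_le)
  finally have "card (V - {v}) \<le> card ?Q + card ?N" .
  moreover have "card (V - {v}) = card V - 1" using v fV by simp
  ultimately show ?thesis using cQ unfolding degree_def by linarith
qed

lemma real_ineq:
  fixes \<beta> \<mu> n M D :: real
  assumes b: "\<beta> > 0" and m: "\<mu> > 0" and bm: "\<beta> + 2 * sqrt \<mu> \<le> 1 / 1200"
    and M0: "0 \<le> M" and Mb: "M \<le> \<beta> * n^2" and D1: "n / 5 \<le> D" and D2: "n - 1 - M \<le> D"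
    and big: "1 \<le> M \<or> 1 \<le> \<mu> * n" and n3: "3 \<le> n"
  shows "0 \<le> D - 6 - \<mu> * n \<and> 5 * n + 6 * M + 6 * (\<mu> * n) * n < (D - 6 - \<mu> * n)^2"
proof -
  have s0: "0 \<le> sqrt \<mu>" using m by simp
  have s1: "sqrt \<mu> \<le> 1/2400" using bm b by linarith
  have "\<mu> = sqrt \<mu> * sqrt \<mu>" using m by simp
  also have "\<dots> \<le> (1/2400) * (1/2400)" using s0 s1 by (intro mult_mono) auto
  finally have mu: "\<mu> \<le> 1/5760000" by simp
  have bb: "\<beta> \<le> 1/1200" using bm s0 by linarith
  have n0: "0 \<le> n" using n3 by simp
  have nn: "n^2 = n * n" by (simp add: power2_eq_square)
  have Mb2: "M \<le> n * n / 1200"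
  proof -
    have "\<beta> * n^2 \<le> (1/1200) * n^2" using bb by (intro mult_right_mono) auto
    then show ?thesis using Mb nn by simp
  qed
  have mun: "\<mu> * n \<le> n / 5760000" using mu n0 by (metis divide_inverse mult.commute mult_right_mono mult_1 times_divide_eq_right)
  have mun2': "(\<mu> * n) * n \<le> (n / 5760000) * n" using mun n0 by (rule mult_right_mono)
  then have mun2: "(\<mu> * n) * n \<le> (n * n) / 5760000" by simp
  have n35: "34 \<le> n"
  proof (rule ccontr)
    assume "\<not> 34 \<le> n"
    then have nl: "n < 34" by simp
    have "n * n \<le> 34 * 34" using nl n0 by (intro mult_mono) auto
    moreover have "\<mu> * n \<le> 34 / 5760000" using mun nl by linarith
    ultimately show False using big Mb2 by linarith
  qed
  show ?thesis
  proof (cases "250 \<le> n")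
    case True
    have X: "(17/100) * n \<le> D - 6 - \<mu> * n" using D1 mun True by linarith
    have X0: "0 \<le> (17/100) * n" using n0 by simp
    have "((17/100) * n) * ((17/100) * n) \<le> (D - 6 - \<mu> * n) * (D - 6 - \<mu> * n)"
      using X X0 by (intro mult_mono) auto
    then have sq: "(289/10000) * (n * n) \<le> (D - 6 - \<mu> * n)^2" by (simp add: power2_eq_square algebra_simps)
    have "250 * n \<le> n * n" using True n0 by (intro mult_right_mono) auto
    then show ?thesis using sq Mb2 mun2 X X0 True by (simp only: mult.assoc) linarith
  next
    case False
    have Ml: "M \<le> (21/100) * n"
    proof -
      have "n * n \<le> 250 * n" using False n0 by (intro mult_right_mono) auto
      then have "n * n / 1200 \<le> 250 * n / 1200" by (rule divide_right_mono) simp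
      then show ?thesis using Mb2 n0 by linarith
    qed
    have X: "(58/100) * n \<le> D - 6 - \<mu> * n" using D2 Ml mun False n35 by linarith
    have X0: "0 \<le> (58/100) * n" using n0 by simp
    have "((58/100) * n) * ((58/100) * n) \<le> (D - 6 - \<mu> * n) * (D - 6 - \<mu> * n)"
      using X X0 by (intro mult_mono) auto
    then have sq: "(3364/10000) * (n * n) \<le> (D - 6 - \<mu> * n)^2" by (simp add: power2_eq_square algebra_simps)
    have "34 * n \<le> n * n" using n35 n0 by (intro mult_right_mono) auto
    moreover have "(\<mu> * n) * n \<le> (1/1000) * n" using mun False n0 by (intro mult_right_mono) auto
    ultimately show ?thesis using sq Ml X X0 n35 by (simp only: mult.assoc) linarith
  qed
qed

lemma bridge:
  assumes d: "distinct w" and lw: "length w = n"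
    and pr: "2 \<le> p" "p+3 \<le> n" "2 \<le> r" "r+3 \<le> n" "p+3 \<le> r \<or> r+3 \<le> p"
    and E3: "{w!(n-1), w!p} \<in> E" and E5: "{w!0, w!r} \<in> E" and E4: "{w!p, w!r} \<in> E"
    and Em: "{w!(p-1), w!(r-1)} \<in> E" and Ep: "{w!(p+1), w!(r+1)} \<in> E"
    and c6: "\<not> incompatible F {w!(n-2), w!(n-1)} {w!(n-1), w!p}"
    and c1: "\<not> incompatible F {w!1, w!0} {w!0, w!r}"
    and c7: "\<not> incompatible F {w!(n-1), w!p} {w!p, w!r}"
    and c8: "\<not> incompatible F {w!r, w!0} {w!r, w!p}"
    and m1: "\<not> incompatible F {w!(p-2), w!(p-1)} {w!(p-1), w!(r-1)}"
    and m2: "\<not> incompatible F {w!(r-2), w!(r-1)} {w!(r-1), w!(p-1)}"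
    and p1: "\<not> incompatible F {w!(p+1), w!(p+2)} {w!(p+1), w!(r+1)}"
    and p2: "\<not> incompatible F {w!(r+1), w!(r+2)} {w!(r+1), w!(p+1)}"
    and ep: "w!p \<notin> e" and er: "w!r \<notin> e"
    and e: "e \<in> cycle_edges w" "e \<noteq> {w!(n-1), w!0}"
    and bad: "{w!(n-1), w!0} \<notin> E \<or> w!0 \<in> BadV F w \<or> w!(n-1) \<in> BadV F w"
  shows "\<exists>N. distinct N \<and> set N = set w \<and> e \<in> cycle_edges N \<and> Phi E F N < Phi E F w"
proof -
  define lo where "lo = min p r"
  define hi where "hi = max p r"
  have lh: "2 \<le> lo" "hi + 3 \<le> n" "lo + 3 \<le> hi" using pr unfolding lo_def hi_def by auto
  define A where "A = take lo w"
  define B where "B = take (hi - lo - 1) (drop (Suc lo) w)"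
  define C where "C = drop (Suc hi) w"
  have wdec: "w = A @ [w!lo] @ B @ [w!hi] @ C"
  proof -
    have lo_l: "lo < length w" using lh lw by simp
    have w1: "w = take lo w @ w!lo # drop (Suc lo) w" by (rule id_take_nth_drop[OF lo_l])
    let ?D = "drop (Suc lo) w"
    let ?k = "hi - lo - 1"
    have kD: "?k < length ?D" using lh lw by simp
    have w2: "?D = take ?k ?D @ ?D!?k # drop (Suc ?k) ?D" by (rule id_take_nth_drop[OF kD])
    have "?D!?k = w!hi" using lh lw by simp
    moreover have "drop (Suc ?k) ?D = C" unfolding C_def using lh by (simp add: add.commute)
    ultimately have "?D = B @ w!hi # C" using w2 unfolding B_def by simp
    then show ?thesis using w1 unfolding A_def by simp
  qed
  have lA: "length A = lo" and lB: "length B = hi - lo - 1" and lC: "length C = n - Suc hi"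
    using lh lw unfolding A_def B_def C_def by auto
  have neA: "A \<noteq> []" and neB: "B \<noteq> []" and neC: "C \<noteq> []" using lA lB lC lh by auto
  have jA: "\<And>j. j < lo \<Longrightarrow> A!j = w!j" unfolding A_def by simp
  have jB: "\<And>j. j < hi - lo - 1 \<Longrightarrow> B!j = w!(Suc lo + j)" unfolding B_def using lh lw by simp
  have jC: "\<And>j. j < n - Suc hi \<Longrightarrow> C!j = w!(Suc hi + j)" unfolding C_def using lh lw by simp
  have nA: "hd A = w!0" "A!1 = w!1" "last A = w!(lo-1)" "A!(length A - 2) = w!(lo-2)"
    using jA[of 0] jA[of 1] jA[of "lo-1"] jA[of "lo-2"] lh lA hd_conv_nth[OF neA] last_conv_nth[OF neA] by auto
  have i1: "Suc lo + (hi - lo - 2) = hi - 1" "Suc lo + (hi-lo-3) = hi - 2" "Suc hi + (n-hi-2) = n - 1"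
    "Suc hi + (n-hi-3) = n-2" "hi - lo - 1 - 1 = hi-lo-2" "hi-lo-1-2 = hi-lo-3" "n - Suc hi - 1 = n-hi-2"
    "n - Suc hi - 2 = n-hi-3" "Suc lo + 0 = lo + 1" "Suc lo + 1 = lo + 2" "Suc hi + 0 = hi + 1" "Suc hi + 1 = hi + 2"
    using lh by arith+
  have nB: "hd B = w!(lo+1)" "B!1 = w!(lo+2)" "last B = w!(hi-1)" "B!(length B - 2) = w!(hi-2)"
  proof -
    have "hd B = B!0" by (rule hd_conv_nth[OF neB])
    also have "\<dots> = w!(Suc lo + 0)" by (rule jB) (use lh in arith)
    finally show "hd B = w!(lo+1)" by (simp only: i1)
    have "B!1 = w!(Suc lo + 1)" by (rule jB) (use lh in arith)
    then show "B!1 = w!(lo+2)" by (simp only: i1)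
    have "last B = B!(hi-lo-2)" using last_conv_nth[OF neB] lB i1 by simp
    also have "\<dots> = w!(Suc lo + (hi-lo-2))" by (rule jB) (use lh in arith)
    finally show "last B = w!(hi-1)" by (simp only: i1)
    have "B!(length B - 2) = B!(hi-lo-3)" using lB i1 by simp
    also have "\<dots> = w!(Suc lo + (hi-lo-3))" by (rule jB) (use lh in arith)
    finally show "B!(length B - 2) = w!(hi-2)" by (simp only: i1)
  qed
  have nC: "hd C = w!(hi+1)" "C!1 = w!(hi+2)" "last C = w!(n-1)" "C!(length C - 2) = w!(n-2)"
  proof -
    have "hd C = C!0" by (rule hd_conv_nth[OF neC])
    also have "\<dots> = w!(Suc hi + 0)" by (rule jC) (use lh in arith)
    finally show "hd C = w!(hi+1)" by (simp only: i1)
    have "C!1 = w!(Suc hi + 1)" by (rule jC) (use lh in arith)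
    then show "C!1 = w!(hi+2)" by (simp only: i1)
    have "last C = C!(n-hi-2)" using last_conv_nth[OF neC] lC i1 by simp
    also have "\<dots> = w!(Suc hi + (n-hi-2))" by (rule jC) (use lh in arith)
    finally show "last C = w!(n-1)" by (simp only: i1)
    have "C!(length C - 2) = C!(n-hi-3)" using lC i1 by simp
    also have "\<dots> = w!(Suc hi + (n-hi-3))" by (rule jC) (use lh in arith)
    finally show "C!(length C - 2) = w!(n-2)" by (simp only: i1)
  qed
  have uv: "{w!lo, w!hi} = {w!p, w!r}" unfolding lo_def hi_def by (cases "p \<le> r") (auto simp: min_def max_def)
  have k1: "{w!(lo-1), w!(hi-1)} \<in> E" "{w!(lo+1), w!(hi+1)} \<in> E"
    "\<not> incompatible F {w!(lo-2), w!(lo-1)} {w!(lo-1), w!(hi-1)}"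
    "\<not> incompatible F {w!(hi-2), w!(hi-1)} {w!(lo-1), w!(hi-1)}"
    "\<not> incompatible F {w!(lo+1), w!(lo+2)} {w!(lo+1), w!(hi+1)}"
    "\<not> incompatible F {w!(hi+1), w!(hi+2)} {w!(lo+1), w!(hi+1)}"
  proof -
    have cm: "{w!(r-1), w!(p-1)} = {w!(p-1), w!(r-1)}" by (rule insert_commute)
    have cp: "{w!(r+1), w!(p+1)} = {w!(p+1), w!(r+1)}" by (rule insert_commute)
    have m2': "\<not> incompatible F {w!(r-2), w!(r-1)} {w!(p-1), w!(r-1)}" using m2 cm by simp
    have p2': "\<not> incompatible F {w!(r+1), w!(r+2)} {w!(p+1), w!(r+1)}" using p2 cp by simp
    have m1': "\<not> incompatible F {w!(p-2), w!(p-1)} {w!(r-1), w!(p-1)}" using m1 cm by simp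
    have p1': "\<not> incompatible F {w!(p+1), w!(p+2)} {w!(r+1), w!(p+1)}" using p1 cp by simp
    have Em': "{w!(r-1), w!(p-1)} \<in> E" using Em cm by simp
    have Ep': "{w!(r+1), w!(p+1)} \<in> E" using Ep cp by simp
    have kk: "{w!(lo-1), w!(hi-1)} \<in> E \<and> {w!(lo+1), w!(hi+1)} \<in> E \<and>
      \<not> incompatible F {w!(lo-2), w!(lo-1)} {w!(lo-1), w!(hi-1)} \<and>
      \<not> incompatible F {w!(hi-2), w!(hi-1)} {w!(lo-1), w!(hi-1)} \<and>
      \<not> incompatible F {w!(lo+1), w!(lo+2)} {w!(lo+1), w!(hi+1)} \<and>
      \<not> incompatible F {w!(hi+1), w!(hi+2)} {w!(lo+1), w!(hi+1)}"
    proof (cases "p \<le> r")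
      case True
      then have "lo = p" "hi = r" unfolding lo_def hi_def by auto
      then show ?thesis using Em Ep m1 m2' p1 p2' by simp
    next
      case False
      then have "lo = r" "hi = p" unfolding lo_def hi_def by auto
      then show ?thesis using Em' Ep' m1' m2 p1' p2 by simp
    qed
    then show "{w!(lo-1), w!(hi-1)} \<in> E" "{w!(lo+1), w!(hi+1)} \<in> E"
      "\<not> incompatible F {w!(lo-2), w!(lo-1)} {w!(lo-1), w!(hi-1)}"
      "\<not> incompatible F {w!(hi-2), w!(hi-1)} {w!(lo-1), w!(hi-1)}"
      "\<not> incompatible F {w!(lo+1), w!(lo+2)} {w!(lo+1), w!(hi+1)}"
      "\<not> incompatible F {w!(hi+1), w!(hi+2)} {w!(lo+1), w!(hi+1)}" by blast+
  qed
  define N where "N = A @ rev B @ C @ [w!p, w!r]"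
  have s1: "{w!0, w!r} = {w!r, w!0}" "{w!1, w!0} = {w!0, w!1}" by (rule insert_commute)+
  have res: "distinct N \<and> set N = set w \<and> e \<in> cycle_edges N \<and> Phi E F N < Phi E F w"
  proof (rule move[OF d wdec _ _ _ uv N_def])
    show "2 \<le> length A" "2 \<le> length B" "2 \<le> length C" using lA lB lC lh by auto
    show "{last A, last B} \<in> E" "{hd B, hd C} \<in> E" using k1 nA nB nC by simp_all
    show "{last C, w!p} \<in> E" "{w!p, w!r} \<in> E" "{w!r, hd A} \<in> E" using E3 E4 E5 nA nC s1 by simp_all
    show "\<not> incompatible F {hd A, A!1} {w!r, hd A}" using c1 nA s1 by simp
    show "\<not> incompatible F {A!(length A - 2), last A} {last A, last B}" using k1 nA nB by simp
    show "\<not> incompatible F {hd B, B!1} {hd B, hd C}" using k1 nB nC by simp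
    show "\<not> incompatible F {B!(length B - 2), last B} {last A, last B}" using k1 nA nB by simp
    show "\<not> incompatible F {hd C, C!1} {hd B, hd C}" using k1 nB nC by simp
    show "\<not> incompatible F {C!(length C - 2), last C} {last C, w!p}" using c6 nC by simp
    show "\<not> incompatible F {last C, w!p} {w!p, w!r}" using c7 nC by simp
    show "\<not> incompatible F {w!p, w!r} {w!r, hd A}" using c8 nA s1 incompatible_sym[of F "{w!r, w!0}" "{w!r, w!p}"] insert_commute[of "w!r" "w!p"] by simp
    show "e \<in> cycle_edges w" using e by simp
    have "w!lo \<notin> e" "w!hi \<notin> e" using ep er unfolding lo_def hi_def by (auto simp: min_def max_def)
    then show "e \<notin> {{last A, w!lo}, {w!lo, hd B}, {last B, w!hi}, {w!hi, hd C}, {last C, hd A}}"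
      using e(2) nA nC by auto
    show "{last C, hd A} \<notin> E \<or> hd A \<in> BadV F w \<or> last C \<in> BadV F w" using bad nA nC by simp
  qed
  then show ?thesis by blast
qed

lemma incomp_common:
  assumes sys: "incompatibility_system E F" and i: "incompatible F f g"
  shows "\<exists>x. x \<in> f \<and> x \<in> g"
proof -
  obtain x where x: "{f,g} \<in> F x" using i by (auto simp: incompatible_def)
  have H: "\<exists>c d. {f,g} = {c,d} \<and> c \<in> E \<and> d \<in> E \<and> c \<noteq> d \<and> c \<inter> d = {x}"
    using sys x unfolding incompatibility_system_def by (elim allE ballE) auto
  then obtain c d where cd: "{f,g} = {c,d}" "c \<inter> d = {x}"
    by (elim exE conjE) auto
  then have "(f = c \<and> g = d) \<or> (f = d \<and> g = c)" by (auto simp: doubleton_eq_iff)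
  then have "f \<inter> g = {x}" using cd by auto
  then show ?thesis by blast
qed

theorem theorem3p4:
  fixes V :: "'a set" and E :: "'a set set" and F :: "'a \<Rightarrow> 'a set set set"
    and \<beta> \<mu> :: real and n :: nat
  assumes "\<beta> > 0" and "\<mu> > 0" and "\<beta> + 2 * sqrt \<mu> \<le> 1 / 1200"
    and "simple_graph V E" and "n = card V" and "n \<ge> 3"
    and "\<forall>v\<in>V. real (degree E v) \<ge> real n / 5"
    and "real (card E) \<ge> real (n choose 2) - \<beta> * real n ^ 2"
    and "incompatibility_system E F" and "bounded_system (\<mu> * real n) E F"
    and "e \<in> E"
  shows "\<exists>vs. ham_cycle V E vs \<and> e \<in> cycle_edges vs \<and> compatible_cycle F vs"
proof -
  note b = assms(1) and mu = assms(2) and bm = assms(3) and sg = assms(4) and nV = assms(5)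
    and n3 = assms(6) and deg5 = assms(7) and cE = assms(8) and sys = assms(9) and bnd = assms(10)
    and eE = assms(11)
  have fV: "finite V" using sg unfolding simple_graph_def by simp
  have finE: "finite E" using sg by (rule sg_finE)
  define T where "T = {t. t \<subseteq> V \<and> card t = 2}"
  define M where "M = card (T - E)"
  have finT: "finite T" and ET: "E \<subseteq> T" and cT: "card T = n choose 2"
    using graph_facts[OF sg] nV unfolding T_def by auto
  have cM: "M = card T - card E" unfolding M_def by (rule card_Diff_subset[OF finE ET])
  have cET: "card E \<le> card T" by (rule card_mono[OF finT ET])
  have rM: "real M \<le> \<beta> * real n ^ 2" using cM cET cT cE by (simp add: of_nat_diff)
  have rM0: "0 \<le> real M" by simp
  have NE: "real (card {(x,y). x\<in>V \<and> y\<in>V \<and> x\<noteq>y \<and> {x,y}\<notin>E}) \<le> 2 * real M"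
    using NE_bound[OF sg] unfolding M_def T_def by linarith
  have degM: "real n - 1 - real M \<le> real (degree E v)" if "v \<in> V" for v
    using deg_bound[OF sg that] nV unfolding M_def T_def by linarith
  define Cand where "Cand = (\<lambda>L. distinct L \<and> set L = V \<and> e \<in> cycle_edges L)"
  obtain u0 v0 where e0: "e = {u0,v0}" "u0 \<noteq> v0" "u0 \<in> V" "v0 \<in> V"
    using sg_edge'[OF sg eE] by (elim exE conjE) auto
  obtain xs where xs: "set xs = V - {u0,v0}" "distinct xs"
    using finite_distinct_list[of "V - {u0,v0}"] fV by auto
  have C0: "Cand (u0 # v0 # xs)"
  proof -
    have s: "set (u0 # v0 # xs) = V" using xs e0 by auto
    have dd: "distinct (u0 # v0 # xs)" using xs e0 by auto
    have "length (u0 # v0 # xs) = n" using distinct_card[OF dd] s nV by simp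
    then have "Suc 0 mod length (u0 # v0 # xs) = 1" using n3 by simp
    then have "e \<in> cycle_edges (u0 # v0 # xs)" unfolding cycle_edges_def e0
      by (intro CollectI exI[of _ 0]) auto
    then show ?thesis using s dd unfolding Cand_def by blast
  qed
  obtain L where CL: "Cand L" and Lmin: "\<And>L'. Cand L' \<Longrightarrow> Phi E F L \<le> Phi E F L'"
    using ex_has_least_nat[of Cand "u0 # v0 # xs" "Phi E F"] C0 by blast
  have dL: "distinct L" and sL: "set L = V" and eL: "e \<in> cycle_edges L" using CL unfolding Cand_def by auto
  have lL: "length L = n" using distinct_card[OF dL] sL nV by simp
  have Phi0: "Phi E F L = 0"
  proof (rule ccontr)
    assume nz: "Phi E F L \<noteq> 0"
    have "\<exists>h. h \<in> cycle_edges L \<and> h \<noteq> e \<and> (h \<notin> E \<or> (\<exists>x\<in>h. x \<in> BadV F L))"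
    proof (cases "cycle_edges L - E = {}")
      case False
      then obtain f where "f \<in> cycle_edges L" "f \<notin> E" by blast
      then show ?thesis using eE by blast
    next
      case True
      then have "card (cycle_edges L - E) = 0" by (simp only: card.empty)
      then have "card (BadV F L) \<noteq> 0" using nz unfolding Phi_def by simp
      then have "BadV F L \<noteq> {}" by (metis card.empty)
      then obtain x where "x \<in> BadV F L" by blast
      then obtain f g where fg: "f \<in> cycle_edges L" "g \<in> cycle_edges L" "f \<noteq> g" "x \<in> f" "x \<in> g"
        unfolding BadV_def by blast
      show ?thesis
      proof (cases "f = e")
        case True
        then show ?thesis using fg \<open>x \<in> BadV F L\<close> by blast
      next
        case False
        then show ?thesis using fg \<open>x \<in> BadV F L\<close> by blast
      qed
    qed
    then obtain h where h: "h \<in> cycle_edges L" "h \<noteq> e" "h \<notin> E \<or> (\<exists>x\<in>h. x \<in> BadV F L)" by blast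
    obtain i where i: "i < n" "h = {L!i, L!(Suc i mod n)}" using h(1) lL unfolding cycle_edges_def by auto
    define w where "w = rotate (Suc i) L"
    have dw: "distinct w" and sw: "set w = V" and lw: "length w = n"
      unfolding w_def using dL sL lL by auto
    have cw: "cycle_edges w = cycle_edges L" unfolding w_def by (rule cyc_rotate) (use lL n3 in simp)
    have Bw: "BadV F w = BadV F L" unfolding BadV_def cw ..
    have Pw: "Phi E F w = Phi E F L" unfolding Phi_def Bw cw ..
    have "w!0 = L!((Suc i + 0) mod length L)" unfolding w_def by (rule nth_rotate) (use lL n3 in simp)
    then have w0: "w!0 = L!(Suc i mod n)" using lL by simp
    have wn: "w!(n-1) = L!i"
    proof -
      have "w!(n-1) = L!((Suc i + (n-1)) mod length L)" unfolding w_def by (rule nth_rotate) (use lL n3 in simp)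
      moreover have "(Suc i + (n-1)) mod n = i" using i(1) n3
        by (metis Suc_diff_1 add_Suc_right add.commute le_less_trans less_imp_le_nat mod_add_self2 mod_less zero_less_numeral not_le_imp_less not_less0 bot_nat_0.not_eq_extremum)
      ultimately show ?thesis using lL by simp
    qed
    have hw: "h = {w!(n-1), w!0}" using i(2) w0 wn by simp
    have w0n: "w!0 \<noteq> w!(n-1)" using dw lw n3 by (simp add: nth_eq_iff_index_eq)
    have "w!0 \<in> set w" "w!(n-1) \<in> set w" by (rule nth_mem, use lw n3 in simp)+
    then have w0V: "w!0 \<in> V" and wnV: "w!(n-1) \<in> V" using sw by auto
    have big: "1 \<le> real M \<or> 1 \<le> \<mu> * real n"
    proof (cases "h \<in> E")
      case False
      have "h \<in> T - E" using False hw w0n w0V wnV unfolding T_def by auto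
      then have "M \<noteq> 0" unfolding M_def using finT by auto
      then show ?thesis by simp
    next
      case True
      then obtain x where x: "x \<in> h" "x \<in> BadV F L" using h(3) by blast
      then obtain f g where fg: "f \<in> cycle_edges L" "g \<in> cycle_edges L" "f \<noteq> g" "x \<in> f" "x \<in> g"
        "incompatible F f g" unfolding BadV_def by blast
      have fg2: "f \<in> E \<and> g \<in> E \<and> f \<noteq> g \<and> {f,g} \<in> F x" using incomp_at[OF sys fg(6) fg(4,5)] .
      let ?S = "{e'\<in>E. e' \<noteq> f \<and> x \<in> e' \<and> {f, e'} \<in> F x}"
      have "real (card ?S) \<le> \<mu> * real n" using bnd fg2 fg(4) unfolding bounded_system_def by blast
      moreover have "g \<in> ?S" using fg2 fg(5) by blast
      then have "card ?S \<noteq> 0" using finE by auto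
      ultimately show ?thesis by linarith
    qed
    define D where "D = min (real (degree E (w!0))) (real (degree E (w!(n-1))))"
    have D1: "real n / 5 \<le> D" unfolding D_def using deg5 w0V wnV by simp
    have D2: "real n - 1 - real M \<le> D" unfolding D_def using degM[OF w0V] degM[OF wnV] by simp
    have Da: "D \<le> real (degree E (w!0))" and Db: "D \<le> real (degree E (w!(n-1)))" unfolding D_def by auto
    have RI: "0 \<le> D - 6 - \<mu> * real n \<and> 5 * real n + 6 * real M + 6 * (\<mu> * real n) * real n < (D - 6 - \<mu> * real n)^2"
      by (rule real_ineq[OF b mu bm rM0 rM D1 D2 big]) (use n3 in simp)
    have ce: "card e = 2" using edge_card[OF sg eE] by simp
    obtain p r where pr: "2 \<le> p \<and> p+3 \<le> n \<and> 2 \<le> r \<and> r+3 \<le> n \<and> (p+3 \<le> r \<or> r+3 \<le> p) \<and>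
     {w!(n-1), w!p} \<in> E \<and> {w!0, w!r} \<in> E \<and> {w!p, w!r} \<in> E \<and> {w!(p-1), w!(r-1)} \<in> E \<and>
     {w!(p+1), w!(r+1)} \<in> E \<and>
     \<not> incompatible F {w!(n-2), w!(n-1)} {w!(n-1), w!p} \<and>
     \<not> incompatible F {w!1, w!0} {w!0, w!r} \<and>
     \<not> incompatible F {w!(n-1), w!p} {w!p, w!r} \<and>
     \<not> incompatible F {w!r, w!0} {w!r, w!p} \<and>
     \<not> incompatible F {w!(p-2), w!(p-1)} {w!(p-1), w!(r-1)} \<and>
     \<not> incompatible F {w!(r-2), w!(r-1)} {w!(r-1), w!(p-1)} \<and>
     \<not> incompatible F {w!(p+1), w!(p+2)} {w!(p+1), w!(r+1)} \<and>
     \<not> incompatible F {w!(r+1), w!(r+2)} {w!(r+1), w!(p+1)} \<and>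
     w!p \<notin> e \<and> w!r \<notin> e"
      using find_pr[OF sg sys bnd mu dw sw lw NE Db Da _ _ ce] RI by blast
    have ew: "e \<in> cycle_edges w" "e \<noteq> {w!(n-1), w!0}" using eL cw h(2) hw by auto
    have badw: "{w!(n-1), w!0} \<notin> E \<or> w!0 \<in> BadV F w \<or> w!(n-1) \<in> BadV F w"
      using h(3) hw Bw by auto
    obtain N where N: "distinct N" "set N = set w" "e \<in> cycle_edges N" "Phi E F N < Phi E F w"
      using bridge[OF dw lw, of p r E F e] pr ew badw by blast
    have "Cand N" using N sw unfolding Cand_def by simp
    then have "Phi E F L \<le> Phi E F N" by (rule Lmin)
    then show False using N(4) Pw by simp
  qed
  have fin1: "finite (cycle_edges L - E)" using cyc_finite by blast
  have noBE: "cycle_edges L - E = {}" using Phi0 fin1 unfolding Phi_def by simp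
  have "card (BadV F L) = 0" using Phi0 unfolding Phi_def by simp
  then have noBV: "BadV F L = {}" using BadV_finite[of F L] by simp
  have ham: "ham_cycle V E L"
    unfolding ham_cycle_def
  proof (intro conjI allI impI)
    show "distinct L" "set L = V" by (rule dL, rule sL)
    show "3 \<le> length L" using lL n3 by simp
    fix j assume "j < length L"
    then have "{L!j, L!(Suc j mod length L)} \<in> cycle_edges L" unfolding cycle_edges_def by blast
    then show "{L!j, L!(Suc j mod length L)} \<in> E" using noBE by blast
  qed
  have comp: "compatible_cycle F L"
    unfolding compatible_cycle_def
  proof (intro ballI impI)
    fix f g assume fg: "f \<in> cycle_edges L" "g \<in> cycle_edges L" "f \<noteq> g"
    show "\<not> incompatible F f g"
    proof
      assume inc: "incompatible F f g"
      then obtain x where "x \<in> f" "x \<in> g" using incomp_common[OF sys] by blast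
      then have "x \<in> BadV F L" unfolding BadV_def using fg inc by blast
      then show False using noBV by blast
    qed
  qed
  show ?thesis using ham comp eL by blast
qed

end
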